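(* Let $\Gamma$ be a finite game with CPT players. For a profile of conjectures $\sigma^*=(\sigma^*_1,\dots,\sigma^*_n)\in\prod_i\Delta(A_i)$ consider the condition $$(\ast)\qquad \sigma_i^*\in\overline{co}\big(\mathcal{B}_i(\mu_{-i}(\sigma^*_{-i}))\big)\ \text{ for all } i\in N.$$ (i) If $\tau=(\tau_1,\dots,\tau_n)$ is a mixed black-box strategy Nash equilibrium, then $\sigma^*$ defined by $\sigma^*_i=\sigma_i(\tau_i)$ for all $i$ satisfies $(\ast)$. (ii) If $\sigma^*$ satisfies $(\ast)$, then there exists a mixed black-box strategy Nash equilibrium $\dot\tau=(\dot\tau_1,\dots,\dot\tau_n)$ in which each $\dot\tau_i$ is a finitely supported probability measure on $B_i$ and $\sigma_i(\dot\tau_i)=\sigma^*_i$ for all $i$.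
   Context: A game $\Gamma=(N,(A_i),(x_i))$: players $N=\{1,\dots,n\}$, finite action sets $A_i$, payoffs $x_i:A\to\mathbb{R}$, $A=\prod_iA_i$, $A_{-i}=\prod_{j\neq i}A_j$. Each player $i$ has CPT preferences with CPT value functional $V_i$ on finite lotteries (determined by a reference point, a continuous strictly increasing value function vanishing at the reference point, and continuous strictly increasing probability weighting functions $w_i^\pm:[0,1]\to[0,1]$ fixing $0$ and $1$, via the standard rank-dependent CPT formula). $B_i=\Delta(A_i)$ is the set of black-box strategies; for a belief $\mu_{-i}\in\Delta(A_{-i})$ and $b_i\in B_i$, $\mu(b_i,\mu_{-i})[a]=b_i[a_i]\mu_{-i}[a_{-i}]$, and $\mathcal{B}_i(\mu_{-i})=\arg\max_{b_i\in B_i}V_i(\{(\mu(b_i,\mu_{-i})[a],x_i(a))\}_{a\in A})$. A conjecture over player $j$'s action is $\sigma_j\in\Delta(A_j)$; for $\sigma_{-i}=(\sigma_j)_{j\neq i}$, $\mu_{-i}(\sigma_{-i})\in\Delta(A_{-i})$ is the product distribution $\mu_{-i}(\sigma_{-i})[a_{-i}]=\prod_{j\ne i}\sigma_j[a_j]$. A conjecture over player $i$'s black-box strategy is a Borel probability measure $\tau_i$ on $B_i$; it induces $\sigma_i(\tau_i)\in\Delta(A_i)$, $\sigma_i(\tau_i)[a_i]=\mathbb{E}_{\tau_i}b_i[a_i]$; write $\sigma_{-i}(\tau_{-i})=(\sigma_j(\tau_j))_{j\ne i}$. A profile $\tau=(\tau_1,\dots,\tau_n)$ is a mixed black-box strategy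 Nash equilibrium if for every $i$ and every $b_i\in\operatorname{supp}\tau_i$, $b_i\in\mathcal{B}_i(\mu_{-i}(\sigma_{-i}(\tau_{-i})))$. $\overline{co}$ denotes closed convex hull. *)

theory Defs
  imports "HOL-Analysis.Analysis" "HOL-Probability.Probability"
begin

text \<open>Players form a finite type 'p; all actions live in a
finite type 'a, player i's action set being acts G i.
Mixed actions / black-box strategies of player i are vectors in real^'a supported on acts G i.\<close>

record ('p, 'a) cpt_game =
  acts   :: "'p \<Rightarrow> 'a set"
  pay    :: "'p \<Rightarrow> ('p \<Rightarrow> 'a) \<Rightarrow> real"
  refpt  :: "'p \<Rightarrow> real"
  valfun :: "'p \<Rightarrow> real \<Rightarrow> real"
  wplus  :: "'p \<Rightarrow> real \<Rightarrow> real"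
  wminus :: "'p \<Rightarrow> real \<Rightarrow> real"

definition prob_weighting :: "(real \<Rightarrow> real) \<Rightarrow> bool" where
  "prob_weighting w \<longleftrightarrow> continuous_on {0..1} w \<and> strict_mono_on {0..1} w \<and>
     w ` {0..1} \<subseteq> {0..1} \<and> w 0 = 0 \<and> w 1 = 1"

definition is_cpt_game :: "('p, 'a) cpt_game \<Rightarrow> bool" where
  "is_cpt_game G \<longleftrightarrow> (\<forall>i. acts G i \<noteq> {} \<and>
      continuous_on UNIV (valfun G i) \<and> strict_mono (valfun G i) \<and>
      valfun G i (refpt G i) = 0 \<and>
      prob_weighting (wplus G i) \<and> prob_weighting (wminus G i))"

text \<open>CPT value of the finite lottery {(P l, X l)}_{l in L} (rank-dependent formula, aggregated
over distinct outcome values z).\<close>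
definition cpt_value ::
  "real \<Rightarrow> (real \<Rightarrow> real) \<Rightarrow> (real \<Rightarrow> real) \<Rightarrow> (real \<Rightarrow> real) \<Rightarrow> 'o set \<Rightarrow> ('o \<Rightarrow> real) \<Rightarrow> ('o \<Rightarrow> real) \<Rightarrow> real"
  where
  "cpt_value r v wp wm L P X = (\<Sum>z\<in>X ` L.
     (if r < z then v z * (wp (\<Sum>l\<in>{l\<in>L. z \<le> X l}. P l) - wp (\<Sum>l\<in>{l\<in>L. z < X l}. P l))
      else if z < r then v z * (wm (\<Sum>l\<in>{l\<in>L. X l \<le> z}. P l) - wm (\<Sum>l\<in>{l\<in>L. X l < z}. P l))
      else 0))"

definition vsimplex :: "'a::finite set \<Rightarrow> (real ^ 'a) set" where
  "vsimplex S = {b. (\<forall>a. 0 \<le> b $ a) \<and> (\<forall>a. a \<notin> S \<longrightarrow> b $ a = 0) \<and> (\<Sum>a\<in>S. b $ a) = 1}"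

definition profiles :: "('p, 'a) cpt_game \<Rightarrow> ('p \<Rightarrow> 'a) set" where
  "profiles G = PiE UNIV (acts G)"

text \<open>A_{-i}: profiles of the opponents (extensional functions, undefined at i).\<close>
definition opp_profiles :: "('p, 'a) cpt_game \<Rightarrow> 'p \<Rightarrow> ('p \<Rightarrow> 'a) set" where
  "opp_profiles G i = PiE (UNIV - {i}) (acts G)"

definition joint :: "'p \<Rightarrow> real ^ 'a \<Rightarrow> (('p \<Rightarrow> 'a) \<Rightarrow> real) \<Rightarrow> ('p \<Rightarrow> 'a) \<Rightarrow> real" where
  "joint i b mu = (\<lambda>a. b $ (a i) * mu (a(i := undefined)))"

definition cpt_payoff :: "('p, 'a::finite) cpt_game \<Rightarrow> 'p \<Rightarrow> real ^ 'a \<Rightarrow> (('p \<Rightarrow> 'a) \<Rightarrow> real) \<Rightarrow> real" where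
  "cpt_payoff G i b mu = cpt_value (refpt G i) (valfun G i) (wplus G i) (wminus G i)
      (profiles G) (joint i b mu) (pay G i)"

definition best_resp :: "('p, 'a::finite) cpt_game \<Rightarrow> 'p \<Rightarrow> (('p \<Rightarrow> 'a) \<Rightarrow> real) \<Rightarrow> (real ^ 'a) set" where
  "best_resp G i mu = {b \<in> vsimplex (acts G i).
      \<forall>b' \<in> vsimplex (acts G i). cpt_payoff G i b' mu \<le> cpt_payoff G i b mu}"

definition prod_belief :: "('p::finite, 'a::finite) cpt_game \<Rightarrow> 'p \<Rightarrow> ('p \<Rightarrow> real ^ 'a) \<Rightarrow> ('p \<Rightarrow> 'a) \<Rightarrow> real" where
  "prod_belief G i \<sigma> = (\<lambda>am. if am \<in> opp_profiles G i then (\<Prod>j\<in>UNIV - {i}. \<sigma> j $ am j) else 0)"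

definition bb_conjecture :: "('p, 'a::finite) cpt_game \<Rightarrow> 'p \<Rightarrow> (real ^ 'a) measure \<Rightarrow> bool" where
  "bb_conjecture G i \<tau> \<longleftrightarrow> prob_space \<tau> \<and> sets \<tau> = sets (restrict_space borel (vsimplex (acts G i)))"

definition induced_conj :: "(real ^ 'a::finite) measure \<Rightarrow> real ^ 'a" where
  "induced_conj \<tau> = (\<chi> a. \<integral>b. b $ a \<partial>\<tau>)"

definition meas_support :: "('b::topological_space) measure \<Rightarrow> 'b set" where
  "meas_support M = {x \<in> space M. \<forall>U. open U \<and> x \<in> U \<longrightarrow> 0 < emeasure M (U \<inter> space M)}"

definition mixed_bb_nash :: "('p::finite, 'a::finite) cpt_game \<Rightarrow> ('p \<Rightarrow> (real ^ 'a) measure) \<Rightarrow> bool" where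
  "mixed_bb_nash G \<tau> \<longleftrightarrow> (\<forall>i. bb_conjecture G i (\<tau> i) \<and>
     (\<forall>b \<in> meas_support (\<tau> i). b \<in> best_resp G i (prod_belief G i (\<lambda>j. induced_conj (\<tau> j)))))"

end

theory Submission
  imports Defs
begin

lemma support_AE:
  fixes M :: "('b::second_countable_topology) measure"
  assumes "\<And>U. open U \<Longrightarrow> U \<inter> space M \<in> sets M"
  shows "AE x in M. x \<in> meas_support M"
proof -
  define F where "F = {U. open U \<and> emeasure M (U \<inter> space M) = 0}"
  obtain F' where F': "F' \<subseteq> F" "countable F'" "\<Union>F' = \<Union>F"
    using Lindelof[of F] unfolding F_def by blast
  have N: "(\<Union>U\<in>F'. U \<inter> space M) \<in> null_sets M"
  proof (rule null_sets_UN')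
    show "countable F'" by fact
    fix U assume "U \<in> F'"
    then have "open U" "emeasure M (U \<inter> space M) = 0" using F' unfolding F_def by auto
    then show "U \<inter> space M \<in> null_sets M" using assms by (auto intro: null_setsI)
  qed
  show ?thesis
  proof (rule AE_I'[OF N], safe)
    fix x assume x: "x \<in> space M" "x \<notin> meas_support M"
    then obtain U where U: "open U" "x \<in> U" "\<not> 0 < emeasure M (U \<inter> space M)"
      unfolding meas_support_def by auto
    then have "U \<in> F" unfolding F_def by (auto simp: zero_less_iff_neq_zero)
    then have "x \<in> \<Union>F'" using F' U by auto
    then show "x \<in> (\<Union>U\<in>F'. U \<inter> space M)" using x by auto
  qed
qed

lemma barycenter_in:
  fixes M :: "(real ^ 'a::finite) measure"
  assumes P: "prob_space M" and C: "closed C" "convex C"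
    and AE: "AE x in M. x \<in> C" and int: "\<And>k. integrable M (\<lambda>x. x $ k)"
  shows "(\<chi> k. \<integral>x. x $ k \<partial>M) \<in> C"
proof (rule ccontr)
  interpret prob_space M by (rule P)
  let ?z = "(\<chi> k. \<integral>x. x $ k \<partial>M)"
  assume "?z \<notin> C"
  then obtain a b where ab: "a \<bullet> ?z < b" "\<forall>x\<in>C. b < a \<bullet> x"
    using separating_hyperplane_closed_point[OF C(2) C(1)] by blast
  have ip: "\<And>y. a \<bullet> y = (\<Sum>k\<in>UNIV. a $ k * y $ k)"
    by (simp add: inner_vec_def)
  have intk: "\<And>k. integrable M (\<lambda>x. a $ k * x $ k)" using int by auto
  have "(\<integral>x. a \<bullet> x \<partial>M) = (\<Sum>k\<in>UNIV. \<integral>x. a $ k * x $ k \<partial>M)"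
    unfolding ip by (intro Bochner_Integration.integral_sum intk)
  also have "\<dots> = a \<bullet> ?z" unfolding ip by simp
  finally have eq: "(\<integral>x. a \<bullet> x \<partial>M) = a \<bullet> ?z" .
  have intip: "integrable M (\<lambda>x. a \<bullet> x)" unfolding ip using intk by auto
  have "(\<integral>x. b \<partial>M) \<le> (\<integral>x. a \<bullet> x \<partial>M)"
  proof (rule integral_mono_AE)
    show "AE x in M. b \<le> a \<bullet> x" using AE by eventually_elim (use ab(2) in force)
  qed (use intip in auto)
  moreover have "(\<integral>x. b \<partial>M) = b" by (simp add: prob_space)
  ultimately show False using eq ab(1) by linarith
qed

lemma vsimplex_bound:
  assumes "b \<in> vsimplex S"
  shows "0 \<le> b $ k \<and> b $ k \<le> 1"
proof -
  have nn: "\<forall>a. 0 \<le> b $ a" and out: "\<forall>a. a \<notin> S \<longrightarrow> b $ a = 0" and s1: "(\<Sum>a\<in>S. b $ a) = 1"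
    using assms unfolding vsimplex_def by auto
  show ?thesis
  proof (cases "k \<in> S")
    case True
    have "b $ k \<le> (\<Sum>a\<in>S. b $ a)" by (rule member_le_sum) (use True nn in auto)
    then show ?thesis using s1 nn by auto
  qed (use out in auto)
qed

lemma part1:
  assumes "mixed_bb_nash G \<tau>"
  shows "induced_conj (\<tau> i) \<in>
           closure (convex hull (best_resp G i (prod_belief G i (\<lambda>j. induced_conj (\<tau> j)))))"
proof -
  let ?S = "vsimplex (acts G i)"
  let ?M = "\<tau> i"
  let ?BR = "best_resp G i (prod_belief G i (\<lambda>j. induced_conj (\<tau> j)))"
  have P: "prob_space ?M" and sets: "sets ?M = sets (restrict_space borel ?S)"
    and supp: "meas_support ?M \<subseteq> ?BR"
    using assms unfolding mixed_bb_nash_def bb_conjecture_def by auto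
  have sp: "space ?M = ?S" using sets_eq_imp_space_eq[OF sets] by (simp add: space_restrict_space)
  have opn: "U \<inter> space ?M \<in> sets ?M" if "open U" for U
  proof -
    have "U \<in> sets borel" using that by auto
    then have "?S \<inter> U \<in> sets (restrict_space borel ?S)" by (auto simp: sets_restrict_space)
    then show ?thesis using sets sp by (simp add: Int_commute)
  qed
  have AS: "AE x in ?M. x \<in> meas_support ?M" by (rule support_AE) (rule opn)
  have AE: "AE x in ?M. x \<in> closure (convex hull ?BR)"
    using AS
    by eventually_elim (use supp in \<open>meson closure_subset hull_subset subsetD\<close>)
  have int: "integrable ?M (\<lambda>x. x $ k)" for k
  proof (rule finite_measure.integrable_const_bound[where B=1])
    show "finite_measure ?M" using P by (simp add: prob_space_def)
    show "AE x in ?M. norm (x $ k) \<le> 1"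
      by (rule AE_I2) (use vsimplex_bound sp in fastforce)
    have "(\<lambda>x. x $ k) \<in> borel_measurable (restrict_space borel ?S)"
      by (intro measurable_restrict_space1 borel_measurable_nth)
    then show "(\<lambda>x. x $ k) \<in> borel_measurable ?M"
      using measurable_cong_sets[OF sets refl] by blast
  qed
  have "(\<chi> k. \<integral>x. x $ k \<partial>?M) \<in> closure (convex hull ?BR)"
    by (rule barycenter_in[OF P _ _ AE int]) (auto intro: convex_closure)
  then show ?thesis unfolding induced_conj_def[of "\<tau> i"] .
qed

lemma nth_meas_restrict: "(\<lambda>x::real^'a. x $ k) \<in> borel_measurable (restrict_space borel S)"
  by (intro measurable_restrict_space1 borel_measurable_nth)

lemma finite_meas_exists:
  fixes S :: "(real ^ 'a::finite) set"
  assumes fin: "finite s" and sub: "s \<subseteq> S" and nn: "\<forall>x\<in>s. 0 \<le> u x" and su: "sum u s = 1"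
  shows "\<exists>\<tau>. prob_space \<tau> \<and> sets \<tau> = sets (restrict_space borel S) \<and> meas_support \<tau> \<subseteq> s \<and>
           (\<forall>k. (\<integral>b. b $ k \<partial>\<tau>) = (\<Sum>x\<in>s. u x * x $ k))"
proof -
  have "s \<noteq> {}" using su by auto
  then obtain s0 where s0: "s0 \<in> s" by auto
  define f where "f x = (if x \<in> s then u x else 0)" for x
  have fnn: "\<And>x. 0 \<le> f x" using nn by (auto simp: f_def)
  have "(\<integral>\<^sup>+ x. ennreal (f x) \<partial>count_space UNIV) = (\<Sum>x\<in>s. ennreal (f x))"
    by (rule nn_integral_count_space') (use fin in \<open>auto simp: f_def\<close>)
  also have "\<dots> = ennreal (\<Sum>x\<in>s. f x)" by (rule sum_ennreal) (use fnn in auto)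
  also have "(\<Sum>x\<in>s. f x) = 1" using su by (simp add: f_def)
  finally have f1: "(\<integral>\<^sup>+ x. ennreal (f x) \<partial>count_space UNIV) = 1" by simp
  define p where "p = embed_pmf f"
  have pmf_p: "\<And>x. pmf p x = f x" unfolding p_def by (rule pmf_embed_pmf[OF fnn f1])
  have set_p: "set_pmf p = {x. f x \<noteq> 0}" unfolding p_def by (rule set_embed_pmf[OF fnn f1])
  have set_ps: "set_pmf p \<subseteq> s" using set_p by (auto simp: f_def split: if_splits)
  define g where "g x = (if x \<in> S then x else s0)" for x
  define N where "N = restrict_space borel S"
  have spN: "space N = S" by (simp add: N_def space_restrict_space)
  have gm: "g \<in> measure_pmf p \<rightarrow>\<^sub>M N"
    unfolding measurable_pmf_measure1 spN using s0 sub by (auto simp: g_def)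
  define \<tau> where "\<tau> = distr (measure_pmf p) N g"
  have P: "prob_space \<tau>" unfolding \<tau>_def by (rule measure_pmf.prob_space_distr[OF gm])
  have sets: "sets \<tau> = sets N" unfolding \<tau>_def by simp
  have sptau: "space \<tau> = S" unfolding \<tau>_def by (simp add: spN)
  have supp: "meas_support \<tau> \<subseteq> s"
  proof
    fix x assume x: "x \<in> meas_support \<tau>"
    show "x \<in> s"
    proof (rule ccontr)
      assume xs: "x \<notin> s"
      have "open (- s)" using fin by (simp add: finite_imp_closed open_Compl)
      then have pos: "0 < emeasure \<tau> ((- s) \<inter> space \<tau>)" using x xs unfolding meas_support_def by auto
      have "(- s) \<inter> S \<in> sets N" unfolding N_def
        using \<open>open (- s)\<close> by (auto simp: sets_restrict_space)
      then have "emeasure \<tau> ((- s) \<inter> space \<tau>) = emeasure (measure_pmf p) (g -` ((- s) \<inter> S) \<inter> space (measure_pmf p))"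
        unfolding sptau unfolding \<tau>_def by (rule emeasure_distr[OF gm])
      also have "\<dots> = emeasure (measure_pmf p) ((g -` ((- s) \<inter> S) \<inter> space (measure_pmf p)) \<inter> set_pmf p)"
        by (simp add: emeasure_Int_set_pmf)
      also have "(g -` ((- s) \<inter> S) \<inter> space (measure_pmf p)) \<inter> set_pmf p = {}"
        using set_ps sub s0 by (auto simp: g_def split: if_splits)
      finally show False using pos by simp
    qed
  qed
  have integ: "(\<integral>b. b $ k \<partial>\<tau>) = (\<Sum>x\<in>s. u x * x $ k)" for k
  proof -
    have "(\<integral>b. b $ k \<partial>\<tau>) = (\<integral>x. (g x) $ k \<partial>measure_pmf p)"
      unfolding \<tau>_def by (rule integral_distr[OF gm]) (simp add: N_def nth_meas_restrict)
    also have "\<dots> = (\<Sum>a\<in>s. (g a) $ k * pmf p a)"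
      by (rule integral_measure_pmf_real) (use fin set_ps in auto)
    also have "\<dots> = (\<Sum>x\<in>s. u x * x $ k)"
      by (rule sum.cong) (use sub in \<open>auto simp: g_def pmf_p f_def\<close>)
    finally show ?thesis .
  qed
  show ?thesis using P sets supp integ unfolding N_def by blast
qed

lemma joint_nonneg:
  assumes "b \<in> vsimplex (acts G i)" "\<forall>j. \<sigma> j \<in> vsimplex (acts G j)"
  shows "0 \<le> joint i b (prod_belief G i \<sigma>) a"
  using assms unfolding joint_def prod_belief_def vsimplex_def
  by (auto intro!: mult_nonneg_nonneg prod_nonneg)

lemma joint_total:
  assumes b: "b \<in> vsimplex (acts G i)" and sg: "\<forall>j. \<sigma> j \<in> vsimplex (acts G j)"
  shows "(\<Sum>a\<in>profiles G. joint i b (prod_belief G i \<sigma>) a) = 1"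
proof -
  define c where "c = \<sigma>(i := b)"
  have c: "\<And>j. (\<Sum>x\<in>acts G j. c j $ x) = 1" using b sg unfolding c_def vsimplex_def by auto
  have eq: "joint i b (prod_belief G i \<sigma>) a = (\<Prod>j\<in>UNIV. c j $ a j)" if a: "a \<in> profiles G" for a
  proof -
    have "a(i := undefined) \<in> opp_profiles G i"
      using a unfolding opp_profiles_def profiles_def by (auto simp: PiE_def extensional_def Pi_def)
    then have "joint i b (prod_belief G i \<sigma>) a = b $ a i * (\<Prod>j\<in>UNIV - {i}. \<sigma> j $ (a(i := undefined)) j)"
      unfolding joint_def prod_belief_def by simp
    also have "(\<Prod>j\<in>UNIV - {i}. \<sigma> j $ (a(i := undefined)) j) = (\<Prod>j\<in>UNIV - {i}. c j $ a j)"
      by (rule prod.cong) (auto simp: c_def)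
    also have "b $ a i * \<dots> = (\<Prod>j\<in>UNIV. c j $ a j)"
      by (subst prod.remove[of UNIV i]) (auto simp: c_def)
    finally show ?thesis .
  qed
  have "(\<Sum>a\<in>profiles G. joint i b (prod_belief G i \<sigma>) a) = (\<Sum>a\<in>PiE UNIV (acts G). \<Prod>j\<in>UNIV. c j $ a j)"
    unfolding profiles_def by (rule sum.cong) (auto simp: eq profiles_def)
  also have "\<dots> = (\<Prod>j\<in>UNIV. \<Sum>x\<in>acts G j. c j $ x)"
    by (rule prod_sum_PiE[symmetric]) auto
  also have "\<dots> = 1" using c by simp
  finally show ?thesis .
qed

lemma joint_partial:
  assumes "b \<in> vsimplex (acts G i)" "\<forall>j. \<sigma> j \<in> vsimplex (acts G j)" "A \<subseteq> profiles G"
  shows "(\<Sum>a\<in>A. joint i b (prod_belief G i \<sigma>) a) \<in> {0..1}"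
proof -
  have "0 \<le> (\<Sum>a\<in>A. joint i b (prod_belief G i \<sigma>) a)"
    by (intro sum_nonneg joint_nonneg assms)
  moreover have "(\<Sum>a\<in>A. joint i b (prod_belief G i \<sigma>) a) \<le> (\<Sum>a\<in>profiles G. joint i b (prod_belief G i \<sigma>) a)"
    by (rule sum_mono2) (use assms joint_nonneg in auto)
  ultimately show ?thesis using joint_total[OF assms(1,2)] by simp
qed

lemma cpt_value_cont:
  assumes fin: "finite L" and wp: "continuous_on {0..1} wp" and wm: "continuous_on {0..1} wm"
    and Pc: "\<And>l. continuous_on S (\<lambda>b. P b l)"
    and Pr: "\<And>b A. b \<in> S \<Longrightarrow> A \<subseteq> L \<Longrightarrow> (\<Sum>l\<in>A. P b l) \<in> {0..1}"
  shows "continuous_on S (\<lambda>b. cpt_value r v wp wm L (P b) X)"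
proof -
  have sc: "continuous_on S (\<lambda>b. (\<Sum>l\<in>A. P b l))" for A
    by (intro continuous_on_sum Pc)
  have wc: "continuous_on S (\<lambda>b. w (\<Sum>l\<in>A. P b l))" if "continuous_on {0..1} w" "A \<subseteq> L" for w A
    by (rule continuous_on_compose2[OF that(1) sc]) (use Pr that(2) in auto)
  show ?thesis unfolding cpt_value_def
  proof (intro continuous_on_sum)
    fix z
    show "continuous_on S (\<lambda>b. if r < z then v z * (wp (\<Sum>l\<in>{l \<in> L. z \<le> X l}. P b l) - wp (\<Sum>l\<in>{l \<in> L. z < X l}. P b l))
      else if z < r then v z * (wm (\<Sum>l\<in>{l \<in> L. X l \<le> z}. P b l) - wm (\<Sum>l\<in>{l \<in> L. X l < z}. P b l))
      else 0)"
      by (cases "r < z"; cases "z < r")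
        (auto intro!: continuous_intros wc[OF wp] wc[OF wm])
  qed
qed

lemma vsimplex_compact: "compact (vsimplex (S :: 'a::finite set))"
proof -
  have eq: "vsimplex S = (\<Inter>a. {b. 0 \<le> b $ a}) \<inter> (\<Inter>a\<in>-S. {b. b $ a = 0}) \<inter> {b. (\<Sum>a\<in>S. b $ a) = 1}"
    unfolding vsimplex_def by auto
  have cl: "closed (vsimplex S)" unfolding eq
    by (intro closed_Int closed_INT closed_Collect_le closed_Collect_eq continuous_intros ballI)
  have "vsimplex S \<subseteq> cbox 0 1"
  proof
    fix b assume "b \<in> vsimplex S"
    from vsimplex_bound[OF this] show "b \<in> cbox 0 1" by (auto simp: mem_box_cart)
  qed
  then have "bounded (vsimplex S)" using bounded_cbox bounded_subset by blast
  with cl show ?thesis by (simp add: compact_eq_bounded_closed)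
qed

lemma BR_compact:
  assumes G: "is_cpt_game G" and sg: "\<forall>j. \<sigma> j \<in> vsimplex (acts G j)"
  shows "compact (best_resp G i (prod_belief G i \<sigma>))"
proof -
  let ?S = "vsimplex (acts G i)"
  let ?f = "\<lambda>b. cpt_payoff G i b (prod_belief G i \<sigma>)"
  have pw: "prob_weighting (wplus G i)" "prob_weighting (wminus G i)" using G unfolding is_cpt_game_def by auto
  have fc: "continuous_on ?S ?f" unfolding cpt_payoff_def
  proof (rule cpt_value_cont)
    show "continuous_on {0..1} (wplus G i)" "continuous_on {0..1} (wminus G i)"
      using pw unfolding prob_weighting_def by auto
    show "continuous_on ?S (\<lambda>b. joint i b (prod_belief G i \<sigma>) l)" for l
      unfolding joint_def by (intro continuous_intros)
    show "(\<Sum>l\<in>A. joint i b (prod_belief G i \<sigma>) l) \<in> {0..1}" if "b \<in> ?S" "A \<subseteq> profiles G" for b A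
      by (rule joint_partial) (use that sg in auto)
  qed simp
  have cS: "compact ?S" by (rule vsimplex_compact)
  have eq: "best_resp G i (prod_belief G i \<sigma>) = ?S \<inter> (\<Inter>b'\<in>?S. {b \<in> ?S. ?f b' \<le> ?f b})"
unfolding best_resp_def by blast
  have cl1: "closed {b \<in> ?S. ?f b' \<le> ?f b}" for b'
    by (rule continuous_on_closed_Collect_le[OF continuous_on_const fc compact_imp_closed[OF cS]])
  have cl2: "closed (\<Inter>b'\<in>?S. {b \<in> ?S. ?f b' \<le> ?f b})"
    using cl1 by (simp add: closed_INT)
  have "closed (?S \<inter> (\<Inter>b'\<in>?S. {b \<in> ?S. ?f b' \<le> ?f b}))"
    using compact_imp_closed[OF cS] cl2 by (rule closed_Int)
  then have "closed (best_resp G i (prod_belief G i \<sigma>))" by (simp only: eq)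
  moreover have "best_resp G i (prod_belief G i \<sigma>) \<subseteq> ?S"
    unfolding best_resp_def by (rule Collect_subset)
  then have "bounded (best_resp G i (prod_belief G i \<sigma>))"
    by (rule bounded_subset[OF compact_imp_bounded[OF cS]])
  ultimately show ?thesis using compact_eq_bounded_closed by blast
qed

lemma part2_single:
  assumes G: "is_cpt_game G" and sg: "\<forall>i. \<sigma> i \<in> vsimplex (acts G i)"
    and cl: "\<sigma> i \<in> closure (convex hull (best_resp G i (prod_belief G i \<sigma>)))"
  shows "\<exists>t. prob_space t \<and> sets t = sets (restrict_space borel (vsimplex (acts G i))) \<and>
             finite (meas_support t) \<and> meas_support t \<subseteq> best_resp G i (prod_belief G i \<sigma>) \<and>
             induced_conj t = \<sigma> i"
proof -
  let ?BR = "best_resp G i (prod_belief G i \<sigma>)"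
  have "compact (convex hull ?BR)" by (intro compact_convex_hull BR_compact G sg)
  then have "closed (convex hull ?BR)" by (rule compact_imp_closed)
  then have "closure (convex hull ?BR) = convex hull ?BR" by (rule closure_closed)
  then have "\<sigma> i \<in> convex hull ?BR" using cl by simp
  then obtain s u where su: "finite s" "s \<subseteq> ?BR" "\<forall>x\<in>s. 0 \<le> u x" "sum u s = 1"
    "(\<Sum>v\<in>s. u v *\<^sub>R v) = \<sigma> i"
    unfolding convex_hull_explicit mem_Collect_eq by blast
  have "s \<subseteq> vsimplex (acts G i)" using su(2) unfolding best_resp_def by auto
  from finite_meas_exists[OF su(1) this su(3,4)] obtain t where
    t: "prob_space t" "sets t = sets (restrict_space borel (vsimplex (acts G i)))" "meas_support t \<subseteq> s"
       "\<forall>k. (\<integral>b. b $ k \<partial>t) = (\<Sum>x\<in>s. u x * x $ k)" by blast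
  have ic: "induced_conj t = \<sigma> i"
    unfolding induced_conj_def vec_eq_iff using t(4) su(5)[symmetric] by (simp add: sum_component)
  have fs: "finite (meas_support t)" by (rule finite_subset[OF t(3) su(1)])
  have "meas_support t \<subseteq> ?BR" using t(3) su(2) by (rule order_trans)
  with t(1,2) fs ic show ?thesis by blast
qed

lemma part2:
  assumes G: "is_cpt_game G" and sg: "\<forall>i. \<sigma> i \<in> vsimplex (acts G i)"
    and cl: "\<forall>i. \<sigma> i \<in> closure (convex hull (best_resp G i (prod_belief G i \<sigma>)))"
  shows "\<exists>\<tau>. mixed_bb_nash G \<tau> \<and> (\<forall>i. finite (meas_support (\<tau> i))) \<and>
                 (\<forall>i. induced_conj (\<tau> i) = \<sigma> i)"
proof -
  have "\<forall>i. \<exists>t. prob_space t \<and> sets t = sets (restrict_space borel (vsimplex (acts G i))) \<and>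
             finite (meas_support t) \<and> meas_support t \<subseteq> best_resp G i (prod_belief G i \<sigma>) \<and>
             induced_conj t = \<sigma> i"
    using part2_single[OF G sg] cl by blast
  from choice[OF this] obtain \<tau> where \<tau>: "\<forall>i. prob_space (\<tau> i) \<and> sets (\<tau> i) = sets (restrict_space borel (vsimplex (acts G i))) \<and>
             finite (meas_support (\<tau> i)) \<and> meas_support (\<tau> i) \<subseteq> best_resp G i (prod_belief G i \<sigma>) \<and>
             induced_conj (\<tau> i) = \<sigma> i"
    by (elim exE)
  have eqs: "(\<lambda>j. induced_conj (\<tau> j)) = \<sigma>" using \<tau> by simp
  have "mixed_bb_nash G \<tau>" unfolding mixed_bb_nash_def bb_conjecture_def eqs
  proof (intro allI conjI ballI)
    fix i b
    show "prob_space (\<tau> i)" "sets (\<tau> i) = sets (restrict_space borel (vsimplex (acts G i)))"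
      using \<tau> by simp_all
    assume "b \<in> meas_support (\<tau> i)"
    then show "b \<in> best_resp G i (prod_belief G i \<sigma>)" using \<tau> by blast
  qed
  moreover have "\<forall>i. finite (meas_support (\<tau> i))" "\<forall>i. induced_conj (\<tau> i) = \<sigma> i" using \<tau> by simp_all
  ultimately show ?thesis by blast
qed

theorem proposition1:
  fixes G :: "('p::finite, 'a::finite) cpt_game"
  assumes "is_cpt_game G"
  shows "(\<forall>\<tau>. mixed_bb_nash G \<tau> \<longrightarrow>
            (\<forall>i. induced_conj (\<tau> i) \<in>
                   closure (convex hull (best_resp G i (prod_belief G i (\<lambda>j. induced_conj (\<tau> j)))))))
       \<and> (\<forall>\<sigma>. (\<forall>i. \<sigma> i \<in> vsimplex (acts G i)) \<and>
              (\<forall>i. \<sigma> i \<in> closure (convex hull (best_resp G i (prod_belief G i \<sigma>)))) \<longrightarrow>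
            (\<exists>\<tau>. mixed_bb_nash G \<tau> \<and> (\<forall>i. finite (meas_support (\<tau> i))) \<and>
                 (\<forall>i. induced_conj (\<tau> i) = \<sigma> i)))"
  using part1 part2[OF assms] by blast

end
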